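(* Let $n=25$. The only effective divisor classes $D$ on $X$ with $\chi(D)\ge2$ and $2B\cdot D<B\cdot K$ are the classes $H-E_i$, $1\le i\le 25$.
   Context: Let $X$ be the blowup of $\mathbb{P}^2_{\mathbb{C}}$ at $n$ very general points, with $H$ the pullback of a line class, $E_i$ the exceptional divisors, $E=\sum_iE_i$, and $K=K_X=-3H+E$; $B=\sqrt nH-E$ (so $B=5H-E$ for $n=25$). Write $\chi(D)=\chi(\mathcal{O}_X(D))$; effective means the class of an effective divisor. *)

theory Defs
  imports Complex_Main "HOL-Library.Countable_Set"
begin

(* Divisor classes on X = Bl_{p_1..p_n} P^2 are written D = d H - sum_{i=1..n} m i E_i,
   with d :: int and m :: nat => int (only the values m 1, ..., m n matter). *)

definition ffall :: "nat \<Rightarrow> nat \<Rightarrow> nat" where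
  "ffall a k = (if k \<le> a then fact a div fact (a - k) else 0)"

(* A ternary form of degree d is F = sum_{a+b<=d} c a b * x^a y^b z^(d-a-b).
   hderiv d c (k1,k2,k3) p is the value at p of d^(k1+k2+k3) F / dx^k1 dy^k2 dz^k3. *)
definition hderiv :: "nat \<Rightarrow> (nat \<Rightarrow> nat \<Rightarrow> complex) \<Rightarrow> nat \<Rightarrow> nat \<Rightarrow> nat
      \<Rightarrow> complex \<times> complex \<times> complex \<Rightarrow> complex" where
  "hderiv d c k1 k2 k3 p =
     (\<Sum>a\<le>d. \<Sum>b\<le>d - a. c a b * of_nat (ffall a k1 * ffall b k2 * ffall (d - a - b) k3)
        * fst p ^ (a - k1) * fst (snd p) ^ (b - k2) * snd (snd p) ^ (d - a - b - k3))"

definition nonzero_form :: "nat \<Rightarrow> (nat \<Rightarrow> nat \<Rightarrow> complex) \<Rightarrow> bool" where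
  "nonzero_form d c \<longleftrightarrow> (\<exists>a b. a + b \<le> d \<and> c a b \<noteq> 0)"

(* the form has multiplicity >= m at p (char 0: all partials of order < m vanish);
   trivially true if m <= 0 *)
definition mult_ge :: "nat \<Rightarrow> (nat \<Rightarrow> nat \<Rightarrow> complex) \<Rightarrow> complex \<times> complex \<times> complex \<Rightarrow> int \<Rightarrow> bool" where
  "mult_ge d c p m \<longleftrightarrow> (\<forall>k1 k2 k3. int (k1 + k2 + k3) < m \<longrightarrow> hderiv d c k1 k2 k3 p = 0)"

(* d H - sum m_i E_i is the class of an effective divisor on the blowup of P^2 at P 1, ..., P n:
   d >= 0 and there is a nonzero degree-d plane curve with multiplicity >= m_i at P i
   (an effective divisor is a strict transform plus nonnegative combination of the E_i). *)
definition effective :: "nat \<Rightarrow> (nat \<Rightarrow> complex \<times> complex \<times> complex) \<Rightarrow> int \<Rightarrow> (nat \<Rightarrow> int) \<Rightarrow> bool" where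
  "effective n P d m \<longleftrightarrow> d \<ge> 0 \<and> (\<exists>c. nonzero_form (nat d) c \<and> (\<forall>i\<in>{1..n}. mult_ge (nat d) c (P i) (m i)))"

(* intersection form: H^2 = 1, E_i^2 = -1, H.E_i = 0, E_i.E_j = 0 *)
definition inter :: "nat \<Rightarrow> int \<times> (nat \<Rightarrow> int) \<Rightarrow> int \<times> (nat \<Rightarrow> int) \<Rightarrow> int" where
  "inter n D D' = fst D * fst D' - (\<Sum>i\<in>{1..n}. snd D i * snd D' i)"

(* K = -3H + E *)
definition canon :: "int \<times> (nat \<Rightarrow> int)" where
  "canon = (-3, \<lambda>i. -1)"

(* chi(O_X(D)) via Riemann-Roch on the rational surface X: chi(D) = 1 + (D.D - D.K)/2 *)
definition chi :: "nat \<Rightarrow> int \<times> (nat \<Rightarrow> int) \<Rightarrow> int" where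
  "chi n D = 1 + (inter n D D - inter n D canon) div 2"

(* multivariate polynomials in variables v 0, ..., v (N-1), as finitely supported coefficient functions
   on exponent vectors *)
definition mp_support :: "((nat \<Rightarrow> nat) \<Rightarrow> complex) \<Rightarrow> (nat \<Rightarrow> nat) set" where
  "mp_support f = {\<alpha>. f \<alpha> \<noteq> 0}"

definition is_nonzero_mpoly :: "nat \<Rightarrow> ((nat \<Rightarrow> nat) \<Rightarrow> complex) \<Rightarrow> bool" where
  "is_nonzero_mpoly N f \<longleftrightarrow> finite (mp_support f) \<and> mp_support f \<noteq> {}
      \<and> (\<forall>\<alpha>\<in>mp_support f. \<forall>j\<ge>N. \<alpha> j = 0)"

definition mp_eval :: "nat \<Rightarrow> ((nat \<Rightarrow> nat) \<Rightarrow> complex) \<Rightarrow> (nat \<Rightarrow> complex) \<Rightarrow> complex" where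
  "mp_eval N f v = (\<Sum>\<alpha>\<in>mp_support f. f \<alpha> * (\<Prod>j<N. v j ^ \<alpha> j))"

(* Q holds for very general v in C^N: outside a countable union of proper Zariski closed subsets
   (each contained in a hypersurface) *)
definition very_general :: "nat \<Rightarrow> ((nat \<Rightarrow> complex) \<Rightarrow> bool) \<Rightarrow> bool" where
  "very_general N Q \<longleftrightarrow> (\<exists>S. countable S \<and> (\<forall>f\<in>S. is_nonzero_mpoly N f)
      \<and> (\<forall>v. (\<forall>f\<in>S. mp_eval N f v \<noteq> 0) \<longrightarrow> Q v))"

definition pts :: "(nat \<Rightarrow> complex) \<Rightarrow> nat \<Rightarrow> complex \<times> complex \<times> complex" where
  "pts v i = (v (2 * (i - 1)), v (2 * (i - 1) + 1), 1)"

end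

theory Submission
  imports Defs
begin

lemma cs25:
  fixes m :: "nat \<Rightarrow> int"
  shows "(\<Sum>i\<in>{1..25::nat}. m i) ^ 2 \<le> 25 * (\<Sum>i\<in>{1..25::nat}. m i * m i)"
proof -
  define s where "s = (\<Sum>i\<in>{1..25::nat}. m i)"
  define Q where "Q = (\<Sum>i\<in>{1..25::nat}. m i * m i)"
  have "0 \<le> (\<Sum>i\<in>{1..25::nat}. (25 * m i - s)^2)" by (rule sum_nonneg) simp
  also have "\<dots> = (\<Sum>i\<in>{1..25::nat}. 625 * (m i * m i) - 50 * s * m i + s * s)"
    by (rule sum.cong) (auto simp: power2_eq_square algebra_simps)
  also have "\<dots> = 625 * Q - 50 * s * s + 25 * s * s"
    by (simp add: sum.distrib sum_subtractf sum_distrib_left[symmetric] Q_def s_def)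
  finally show ?thesis unfolding s_def[symmetric] Q_def[symmetric] by (simp add: power2_eq_square)
qed

lemma sq_ge: "(x::int) \<le> x * x" 
  by (cases "x \<le> 0") (auto intro: order_trans[of _ 1] simp: mult_le_cancel_left1)

lemma sq_ge2: "0 \<le> (x::int) * x + x"
proof -
  have "0 \<le> x * (x + 1)" by (cases "x \<le> -1") (auto simp: zero_le_mult_iff)
  then show ?thesis by (simp add: algebra_simps)
qed

lemma forward:
  fixes m :: "nat \<Rightarrow> int" and d :: int
  assumes d0: "d \<ge> 0"
    and chi: "d * d - (\<Sum>i\<in>{1..25::nat}. m i * m i) + 3 * d - (\<Sum>i\<in>{1..25::nat}. m i) \<ge> 2"
    and bs: "(\<Sum>i\<in>{1..25::nat}. m i) \<ge> 5 * d - 4"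
  shows "d = 1 \<and> (\<exists>i\<in>{1..25}. \<forall>j\<in>{1..25}. m j = (if j = i then 1 else 0))"
proof -
  define s where "s = (\<Sum>i\<in>{1..25::nat}. m i)"
  define Q where "Q = (\<Sum>i\<in>{1..25::nat}. m i * m i)"
  have cs: "s * s \<le> 25 * Q" using cs25[of m] by (simp add: s_def Q_def power2_eq_square)
  have Qs: "s \<le> Q" unfolding s_def Q_def by (rule sum_mono) (rule sq_ge)
  have Qs2: "0 \<le> Q + s" unfolding s_def Q_def sum.distrib[symmetric] by (rule sum_nonneg) (rule sq_ge2)
  have chi': "d * d - Q + 3 * d - s \<ge> 2" using chi by (simp add: s_def Q_def)
  have bs': "s \<ge> 5 * d - 4" using bs by (simp add: s_def)
  have P: "0 \<le> (s - (5 * d - 4)) * (s + 5 * d + 21)"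
    using bs' d0 by (intro mult_nonneg_nonneg) auto
  have "d \<le> 3"
  proof (rule ccontr)
    assume "\<not> d \<le> 3"
    have "s * s + 25 * s \<le> 25 * d * d + 75 * d - 50" using cs chi' by linarith
    moreover have "(5 * d - 4) * (5 * d - 4) + 25 * (5 * d - 4) \<le> s * s + 25 * s"
      using P by (simp add: algebra_simps)
    ultimately have "(5 * d - 4) * (5 * d - 4) + 25 * (5 * d - 4) \<le> 25 * d * d + 75 * d - 50"
      by linarith
    then show False using \<open>\<not> d \<le> 3\<close> by (simp add: algebra_simps)
  qed
  have d1: "d = 1"
  proof -
    have "d = 0 \<or> d = 1 \<or> d = 2 \<or> d = 3" using d0 \<open>d \<le> 3\<close> by auto
    then show ?thesis using Qs Qs2 chi' bs' by auto
  qed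
  have s1: "s = 1" and Q1: "Q = 1" using Qs chi' bs' d1 by auto
  have "(\<Sum>i\<in>{1..25::nat}. m i * m i - m i) = 0"
    using s1 Q1 by (simp add: sum_subtractf s_def Q_def)
  then have z: "\<forall>i\<in>{1..25::nat}. m i * m i - m i = 0"
    using sq_ge by (subst (asm) sum_nonneg_eq_0_iff) auto
  have m01: "m i = 0 \<or> m i = 1" if "i \<in> {1..25}" for i
  proof -
    have "m i * (m i - 1) = 0" using z that by (simp add: algebra_simps)
    then show ?thesis by auto
  qed
  have nn: "\<forall>i\<in>{1..25::nat}. 0 \<le> m i" using m01 by force
  obtain i where i: "i \<in> {1..25}" "m i \<noteq> 0"
  proof (rule ccontr)
    assume "\<not> thesis"
    then have "\<forall>i\<in>{1..25::nat}. m i = 0" using that by blast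
    then have "s = 0" unfolding s_def by simp
    then show False using s1 by simp
  qed
  have mi: "m i = 1" using m01 i by auto
  have "\<forall>j\<in>{1..25}. m j = (if j = i then 1 else 0)"
  proof
    fix j :: nat assume j: "j \<in> {1..25}"
    show "m j = (if j = i then 1 else 0)"
    proof (cases "j = i")
      case True then show ?thesis using mi by simp
    next
      case False
      have "(\<Sum>k\<in>{i, j}. m k) \<le> s" unfolding s_def
        by (rule sum_mono2) (use i j nn in auto)
      then have "m i + m j \<le> 1" using False s1 by simp
      then show ?thesis using False mi m01[OF j] by auto
    qed
  qed
  then show ?thesis using d1 i by blast
qed

lemma backward:
  fixes P :: "nat \<Rightarrow> complex \<times> complex \<times> complex" and m :: "nat \<Rightarrow> int"
  assumes i: "i \<in> {1..25::nat}" and P3: "snd (snd (P i)) = 1"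
    and m: "\<forall>j\<in>{1..25}. m j = (if j = i then 1 else 0)"
  shows "effective 25 P 1 m"
proof -
  define c :: "nat \<Rightarrow> nat \<Rightarrow> complex" where
    "c = (\<lambda>a b. if a = 1 \<and> b = 0 then 1 else if a = 0 \<and> b = 0 then - fst (P i) else 0)"
  have nz: "nonzero_form 1 c" unfolding nonzero_form_def c_def by (rule exI[of _ 1], rule exI[of _ 0]) simp
  have "mult_ge 1 c (P j) (m j)" if j: "j \<in> {1..25}" for j
  proof (cases "j = i")
    case True
    have "hderiv 1 c 0 0 0 (P i) = 0"
      unfolding hderiv_def c_def using P3
      by (simp add: ffall_def atMost_Suc)
    moreover have "k1 = 0 \<and> k2 = 0 \<and> k3 = 0" if "int (k1 + k2 + k3) < m j" for k1 k2 k3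
      using that True m j by auto
    ultimately show ?thesis unfolding mult_ge_def using True by blast
  next
    case False
    then show ?thesis using m j unfolding mult_ge_def by auto
  qed
  then show ?thesis unfolding effective_def using nz by auto
qed

theorem theorem4p15:
  shows "very_general 50 (\<lambda>v. \<forall>(d::int) (m::nat \<Rightarrow> int).
     (effective 25 (pts v) d m \<and> chi 25 (d, m) \<ge> 2
        \<and> 2 * inter 25 (5, \<lambda>i. 1) (d, m) < inter 25 (5, \<lambda>i. 1) canon)
     \<longleftrightarrow> (d = 1 \<and> (\<exists>i\<in>{1..25}. \<forall>j\<in>{1..25}. m j = (if j = i then 1 else 0))))"
  unfolding very_general_def
proof (rule exI[of _ "{}"], intro conjI allI impI)
  fix v :: "nat \<Rightarrow> complex" and d :: int and m :: "nat \<Rightarrow> int"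
  have K: "inter 25 (5, \<lambda>i. 1) canon = 10" by (simp add: inter_def canon_def)
  have B: "inter 25 (5, \<lambda>i. 1) (d, m) = 5 * d - (\<Sum>i\<in>{1..25::nat}. m i)" by (simp add: inter_def)
  have C: "chi 25 (d, m) = 1 + (d * d - (\<Sum>i\<in>{1..25::nat}. m i * m i) + 3 * d - (\<Sum>i\<in>{1..25::nat}. m i)) div 2"
    by (simp add: chi_def inter_def canon_def sum_negf algebra_simps)
  show "(effective 25 (pts v) d m \<and> chi 25 (d, m) \<ge> 2
        \<and> 2 * inter 25 (5, \<lambda>i. 1) (d, m) < inter 25 (5, \<lambda>i. 1) canon)
     \<longleftrightarrow> (d = 1 \<and> (\<exists>i\<in>{1..25}. \<forall>j\<in>{1..25}. m j = (if j = i then 1 else 0)))"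
  proof
    assume h: "effective 25 (pts v) d m \<and> chi 25 (d, m) \<ge> 2
        \<and> 2 * inter 25 (5, \<lambda>i. 1) (d, m) < inter 25 (5, \<lambda>i. 1) canon"
    have d0: "d \<ge> 0" using h by (simp add: effective_def)
    have c2: "d * d - (\<Sum>i\<in>{1..25::nat}. m i * m i) + 3 * d - (\<Sum>i\<in>{1..25::nat}. m i) \<ge> 2"
      using h C by linarith
    have b: "(\<Sum>i\<in>{1..25::nat}. m i) \<ge> 5 * d - 4" using h K B by linarith
    show "d = 1 \<and> (\<exists>i\<in>{1..25}. \<forall>j\<in>{1..25}. m j = (if j = i then 1 else 0))"
      by (rule forward[OF d0 c2 b])
  next
    assume h: "d = 1 \<and> (\<exists>i\<in>{1..25}. \<forall>j\<in>{1..25}. m j = (if j = i then 1 else 0))"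
    then obtain i where i: "i \<in> {1..25}" and m: "\<forall>j\<in>{1..25}. m j = (if j = i then 1 else 0)" by blast
    have eff: "effective 25 (pts v) 1 m" by (rule backward[OF i _ m]) (simp add: pts_def)
    have s: "(\<Sum>j\<in>{1..25::nat}. m j) = 1"
    proof -
      have "(\<Sum>j\<in>{1..25::nat}. m j) = (\<Sum>j\<in>{1..25::nat}. if j = i then 1 else 0)"
        using m by (intro sum.cong) auto
      then show ?thesis using i by simp
    qed
    have q: "(\<Sum>j\<in>{1..25::nat}. m j * m j) = 1"
    proof -
      have "(\<Sum>j\<in>{1..25::nat}. m j * m j) = (\<Sum>j\<in>{1..25::nat}. if j = i then 1 else 0)"
        using m by (intro sum.cong) auto
      then show ?thesis using i by simp
    qed
    show "effective 25 (pts v) d m \<and> chi 25 (d, m) \<ge> 2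
        \<and> 2 * inter 25 (5, \<lambda>i. 1) (d, m) < inter 25 (5, \<lambda>i. 1) canon"
      using h eff s q C B K by simp
  qed
qed simp_all

end
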